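(* Let $X$ be a Tychonoff space whose $P$-number is $\tau$, and suppose $X$ has a $\tau$-discrete basis of clopen sets. Then $X^n$ is a generalized ordered space for every natural number $n$.
   Context: All spaces are Tychonoff. The $P$-number of a space $X$ is $|X|$ if $X$ is discrete; otherwise it is the largest cardinal $\tau$ such that the intersection of any family of fewer than $\tau$ open subsets of $X$ is open. A family of subsets of $X$ is discrete if every point of $X$ has a neighborhood meeting at most one member of the family. A $\tau$-discrete basis of clopen sets is a base for the topology of the form $\bigcup_{\alpha<\tau}\mathcal B_\alpha$ consisting of clopen sets, with each $\mathcal B_\alpha$ a discrete family. A generalized ordered space (GO-space) is a space homeomorphic to a subspace of a linearly ordered topological space (a space whose topology is generated by open intervals and open rays of some linear order). *)

theory Defs
  imports "HOL-Analysis.Analysis" "HOL-Library.Equipollence"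
begin

definition tychonoff_space :: "'a topology \<Rightarrow> bool" where
  "tychonoff_space X \<longleftrightarrow> completely_regular_space X \<and> t1_space X"

definition discrete_space :: "'a topology \<Rightarrow> bool" where
  "discrete_space X \<longleftrightarrow> (\<forall>x \<in> topspace X. openin X {x})"

text \<open>The cardinal tau is represented as the cardinality of an index set I.
  The intersection of the empty family is taken to be the whole space.
  "I is the P-number of X": if X is discrete, |I| = |X|; otherwise every
  family of fewer than |I| open sets has open intersection, and |I| is the
  largest such cardinal, i.e. the property fails for every larger cardinal,
  equivalently for the successor of |I|: some family of at most |I| open sets
  has non-open intersection.\<close>
definition P_number :: "'a topology \<Rightarrow> 'i set \<Rightarrow> bool" where
  "P_number X I \<longleftrightarrow>
     (if discrete_space X then topspace X \<approx> I
      else (\<forall>\<F>. (\<forall>U\<in>\<F>. openin X U) \<and> \<F> \<prec> I \<longrightarrow> openin X (topspace X \<inter> \<Inter>\<F>))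
         \<and> (\<exists>\<F>. (\<forall>U\<in>\<F>. openin X U) \<and> \<F> \<lesssim> I \<and> \<not> openin X (topspace X \<inter> \<Inter>\<F>)))"

definition discrete_family :: "'a topology \<Rightarrow> 'a set set \<Rightarrow> bool" where
  "discrete_family X \<A> \<longleftrightarrow>
     (\<forall>x \<in> topspace X. \<exists>U. openin X U \<and> x \<in> U \<and>
        (\<forall>A \<in> \<A>. \<forall>B \<in> \<A>. A \<inter> U \<noteq> {} \<and> B \<inter> U \<noteq> {} \<longrightarrow> A = B))"

definition is_base :: "'a topology \<Rightarrow> 'a set set \<Rightarrow> bool" where
  "is_base X \<B> \<longleftrightarrow> (\<forall>B \<in> \<B>. openin X B) \<and>
     (\<forall>U x. openin X U \<and> x \<in> U \<longrightarrow> (\<exists>B \<in> \<B>. x \<in> B \<and> B \<subseteq> U))"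

definition has_discrete_clopen_base :: "'a topology \<Rightarrow> 'i set \<Rightarrow> bool" where
  "has_discrete_clopen_base X I \<longleftrightarrow>
     (\<exists>\<B> :: 'i \<Rightarrow> 'a set set.
        (\<forall>\<alpha> \<in> I. discrete_family X (\<B> \<alpha>)) \<and>
        (\<forall>\<alpha> \<in> I. \<forall>B \<in> \<B> \<alpha>. openin X B \<and> closedin X B) \<and>
        is_base X (\<Union>\<alpha> \<in> I. \<B> \<alpha>))"

text \<open>Linearly ordered topological space: the topology on the carrier S is
  generated by the open intervals and open rays of a linear order r on S
  (together with S itself, which is open in any case).\<close>
definition order_basic_sets :: "'b set \<Rightarrow> 'b rel \<Rightarrow> 'b set set" where
  "order_basic_sets S r =
     {S} \<union>
     {{x \<in> S. (a, x) \<in> r \<and> a \<noteq> x \<and> (x, b) \<in> r \<and> x \<noteq> b} | a b. a \<in> S \<and> b \<in> S} \<union>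
     {{x \<in> S. (a, x) \<in> r \<and> a \<noteq> x} | a. a \<in> S} \<union>
     {{x \<in> S. (x, a) \<in> r \<and> x \<noteq> a} | a. a \<in> S}"

definition LOTS :: "'b topology \<Rightarrow> bool" where
  "LOTS L \<longleftrightarrow> (\<exists>r. linear_order_on (topspace L) r \<and>
     (\<forall>U. openin L U \<longleftrightarrow> U \<subseteq> topspace L \<and>
        (\<forall>x \<in> U. \<exists>V \<in> order_basic_sets (topspace L) r. x \<in> V \<and> V \<subseteq> U)))"

text \<open>The carrier type of the
  LOTS is fixed to be the carrier type of X times int (every GO-space embeds in
  a lexicographically ordered LOTS contained in X x Z).\<close>
definition GO_space :: "'a topology \<Rightarrow> bool" where
  "GO_space X \<longleftrightarrow> (\<exists>(L :: ('a \<times> int) topology) S.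
     LOTS L \<and> S \<subseteq> topspace L \<and> X homeomorphic_space subtopology L S)"

end

theory Submission
  imports Defs
begin


definition LO :: "'b set \<Rightarrow> 'b rel \<Rightarrow> ('b \<Rightarrow> bool) set" where
  "LO L r = {\<lambda>x. True} \<union> {(\<lambda>x. (a,x)\<in>r \<and> a\<noteq>x) | a. a\<in>L}"
definition HI :: "'b set \<Rightarrow> 'b rel \<Rightarrow> ('b \<Rightarrow> bool) set" where
  "HI L r = {\<lambda>x. True} \<union> {(\<lambda>x. (x,a)\<in>r \<and> x\<noteq>a) | a. a\<in>L}"

lemma obs_repr:
  assumes "V \<in> order_basic_sets L r"
  shows "\<exists>lo\<in>LO L r. \<exists>hi\<in>HI L r. V = {x\<in>L. lo x \<and> hi x}"
  using assms unfolding order_basic_sets_def LO_def HI_def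
  apply (elim UnE)
     apply (rule bexI[of _ "\<lambda>x. True"], rule bexI[of _ "\<lambda>x. True"], force, simp, simp)
  apply clarify
    apply (rule_tac x="\<lambda>x. (a,x)\<in>r \<and> a\<noteq>x" in bexI, rule_tac x="\<lambda>x. (x,b)\<in>r \<and> x\<noteq>b" in bexI, force, force, force)
  apply clarify
   apply (rule_tac x="\<lambda>x. (a,x)\<in>r \<and> a\<noteq>x" in bexI, rule bexI[of _ "\<lambda>x. True"], force, force, force)
  apply clarify
  apply (rule bexI[of _ "\<lambda>x. True"], rule_tac x="\<lambda>x. (x,a)\<in>r \<and> x\<noteq>a" in bexI, force, force, force)
  done

lemma obs_of_repr:
  assumes "lo \<in> LO L r" "hi \<in> HI L r"
  shows "{x\<in>L. lo x \<and> hi x} \<in> order_basic_sets L r"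
  using assms unfolding order_basic_sets_def LO_def HI_def
  by (auto; blast)

lemma LO_inter:
  assumes lin: "linear_order_on L r" and "lo1 \<in> LO L r" "lo2 \<in> LO L r"
  shows "\<exists>lo\<in>LO L r. \<forall>x\<in>L. (lo x \<longleftrightarrow> lo1 x \<and> lo2 x)"
proof -
  have tr: "trans r" and an: "antisym r" and tot: "total_on L r" and sub: "r \<subseteq> L \<times> L"
    using lin by (auto simp: linear_order_on_def partial_order_on_def preorder_on_def)
  have key: "\<exists>lo\<in>LO L r. \<forall>x\<in>L. (lo x \<longleftrightarrow> ((a1,x)\<in>r \<and> a1\<noteq>x) \<and> ((a2,x)\<in>r \<and> a2\<noteq>x))"
    if "a1 \<in> L" "a2 \<in> L" "(a1,a2) \<in> r" for a1 a2
  proof (rule bexI[of _ "\<lambda>x. (a2,x)\<in>r \<and> a2\<noteq>x"])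
    show "(\<lambda>x. (a2,x)\<in>r \<and> a2\<noteq>x) \<in> LO L r" using that unfolding LO_def by blast
    show "\<forall>x\<in>L. ((a2,x)\<in>r \<and> a2\<noteq>x) \<longleftrightarrow> ((a1,x)\<in>r \<and> a1\<noteq>x) \<and> ((a2,x)\<in>r \<and> a2\<noteq>x)"
      using that tr an unfolding trans_def antisym_def by blast
  qed
  have c1: "lo1 = (\<lambda>x. True) \<or> (\<exists>a\<in>L. lo1 = (\<lambda>x. (a,x)\<in>r \<and> a\<noteq>x))"
    using assms(2) unfolding LO_def by blast
  have c2: "lo2 = (\<lambda>x. True) \<or> (\<exists>a\<in>L. lo2 = (\<lambda>x. (a,x)\<in>r \<and> a\<noteq>x))"
    using assms(3) unfolding LO_def by blast
  show ?thesis
  proof (cases "lo1 = (\<lambda>x. True)")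
    case True then show ?thesis using assms(3) by (intro bexI[of _ lo2]) auto
  next
    case F1: False
    then obtain a where a: "a \<in> L" "lo1 = (\<lambda>x. (a,x)\<in>r \<and> a\<noteq>x)" using c1 by blast
    show ?thesis
    proof (cases "lo2 = (\<lambda>x. True)")
      case True then show ?thesis using assms(2) by (intro bexI[of _ lo1]) auto
    next
      case False
      then obtain b where b: "b \<in> L" "lo2 = (\<lambda>x. (b,x)\<in>r \<and> b\<noteq>x)" using c2 by blast
      show ?thesis
      proof (cases "(a,b) \<in> r")
        case True then show ?thesis using key[of a b] a b by simp
      next
        case False
        then have "(b,a) \<in> r" using tot a b lin unfolding total_on_def
          by (metis refl_onD linear_order_on_def partial_order_on_def preorder_on_def)
        then show ?thesis using key[of b a] a b by auto
      qed
    qed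
  qed
qed

lemma HI_inter:
  assumes lin: "linear_order_on L r" and "lo1 \<in> HI L r" "lo2 \<in> HI L r"
  shows "\<exists>lo\<in>HI L r. \<forall>x\<in>L. (lo x \<longleftrightarrow> lo1 x \<and> lo2 x)"
proof -
  have tr: "trans r" and an: "antisym r" and tot: "total_on L r" and sub: "r \<subseteq> L \<times> L"
    using lin by (auto simp: linear_order_on_def partial_order_on_def preorder_on_def)
  have key: "\<exists>lo\<in>HI L r. \<forall>x\<in>L. (lo x \<longleftrightarrow> ((x,a1)\<in>r \<and> x\<noteq>a1) \<and> ((x,a2)\<in>r \<and> x\<noteq>a2))"
    if "a1 \<in> L" "a2 \<in> L" "(a1,a2) \<in> r" for a1 a2
  proof (rule bexI[of _ "\<lambda>x. (x,a1)\<in>r \<and> x\<noteq>a1"])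
    show "(\<lambda>x. (x,a1)\<in>r \<and> x\<noteq>a1) \<in> HI L r" using that unfolding HI_def by blast
    show "\<forall>x\<in>L. ((x,a1)\<in>r \<and> x\<noteq>a1) \<longleftrightarrow> ((x,a1)\<in>r \<and> x\<noteq>a1) \<and> ((x,a2)\<in>r \<and> x\<noteq>a2)"
      using that tr an unfolding trans_def antisym_def by blast
  qed
  have c1: "lo1 = (\<lambda>x. True) \<or> (\<exists>a\<in>L. lo1 = (\<lambda>x. (x,a)\<in>r \<and> x\<noteq>a))"
    using assms(2) unfolding HI_def by blast
  have c2: "lo2 = (\<lambda>x. True) \<or> (\<exists>a\<in>L. lo2 = (\<lambda>x. (x,a)\<in>r \<and> x\<noteq>a))"
    using assms(3) unfolding HI_def by blast
  show ?thesis
  proof (cases "lo1 = (\<lambda>x. True)")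
    case True then show ?thesis using assms(3) by (intro bexI[of _ lo2]) auto
  next
    case F1: False
    then obtain a where a: "a \<in> L" "lo1 = (\<lambda>x. (x,a)\<in>r \<and> x\<noteq>a)" using c1 by blast
    show ?thesis
    proof (cases "lo2 = (\<lambda>x. True)")
      case True then show ?thesis using assms(2) by (intro bexI[of _ lo1]) auto
    next
      case False
      then obtain b where b: "b \<in> L" "lo2 = (\<lambda>x. (x,b)\<in>r \<and> x\<noteq>b)" using c2 by blast
      show ?thesis
      proof (cases "(a,b) \<in> r")
        case True then show ?thesis using key[of a b] a b by simp
      next
        case False
        then have "(b,a) \<in> r" using tot a b lin unfolding total_on_def
          by (metis refl_onD linear_order_on_def partial_order_on_def preorder_on_def)
        then show ?thesis using key[of b a] a b by auto
      qed
    qed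
  qed
qed

lemma obs_inter:
  assumes lin: "linear_order_on L r" and "V1 \<in> order_basic_sets L r" "V2 \<in> order_basic_sets L r"
  shows "V1 \<inter> V2 \<in> order_basic_sets L r"
proof -
  obtain lo1 hi1 where 1: "lo1 \<in> LO L r" "hi1 \<in> HI L r" "V1 = {x\<in>L. lo1 x \<and> hi1 x}"
    using obs_repr[OF assms(2)] by blast
  obtain lo2 hi2 where 2: "lo2 \<in> LO L r" "hi2 \<in> HI L r" "V2 = {x\<in>L. lo2 x \<and> hi2 x}"
    using obs_repr[OF assms(3)] by blast
  obtain lo where lo: "lo \<in> LO L r" "\<forall>x\<in>L. (lo x \<longleftrightarrow> lo1 x \<and> lo2 x)"
    using LO_inter[OF lin 1(1) 2(1)] by blast
  obtain hi where hi: "hi \<in> HI L r" "\<forall>x\<in>L. (hi x \<longleftrightarrow> hi1 x \<and> hi2 x)"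
    using HI_inter[OF lin 1(2) 2(2)] by blast
  have "V1 \<inter> V2 = {x\<in>L. lo x \<and> hi x}" unfolding 1(3) 2(3) using lo(2) hi(2) by blast
  then show ?thesis using obs_of_repr[OF lo(1) hi(1)] by simp
qed

definition lots_open :: "'b set \<Rightarrow> 'b rel \<Rightarrow> 'b set \<Rightarrow> bool" where
  "lots_open L r U \<longleftrightarrow> U \<subseteq> L \<and> (\<forall>x\<in>U. \<exists>V\<in>order_basic_sets L r. x \<in> V \<and> V \<subseteq> U)"

lemma obs_sub: "V \<in> order_basic_sets L r \<Longrightarrow> V \<subseteq> L"
  unfolding order_basic_sets_def by auto

lemma istopology_lots:
  assumes lin: "linear_order_on L r"
  shows "istopology (lots_open L r)"
  unfolding istopology_def
proof (intro conjI allI impI)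
  fix S T assume S: "lots_open L r S" and T: "lots_open L r T"
  have SL: "S \<subseteq> L" using S unfolding lots_open_def by simp
  have Sx: "\<And>x. x \<in> S \<Longrightarrow> \<exists>V\<in>order_basic_sets L r. x \<in> V \<and> V \<subseteq> S"
    using S unfolding lots_open_def by simp
  have Tx: "\<And>x. x \<in> T \<Longrightarrow> \<exists>V\<in>order_basic_sets L r. x \<in> V \<and> V \<subseteq> T"
    using T unfolding lots_open_def by simp
  have "\<exists>V\<in>order_basic_sets L r. x \<in> V \<and> V \<subseteq> S \<inter> T" if x: "x \<in> S \<inter> T" for x
  proof -
    obtain V1 where V1: "V1 \<in> order_basic_sets L r" "x \<in> V1" "V1 \<subseteq> S" using Sx x by blast
    obtain V2 where V2: "V2 \<in> order_basic_sets L r" "x \<in> V2" "V2 \<subseteq> T" using Tx x by blast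
    have "V1 \<inter> V2 \<in> order_basic_sets L r" using obs_inter[OF lin V1(1) V2(1)] .
    moreover have "x \<in> V1 \<inter> V2" "V1 \<inter> V2 \<subseteq> S \<inter> T" using V1 V2 by auto
    ultimately show ?thesis by blast
  qed
  then show "lots_open L r (S \<inter> T)" unfolding lots_open_def using SL by auto
next
  fix K assume K: "\<forall>S\<in>K. lots_open L r S"
  have "\<Union>K \<subseteq> L" using K unfolding lots_open_def by auto
  moreover have "\<exists>V\<in>order_basic_sets L r. x \<in> V \<and> V \<subseteq> \<Union>K" if xK: "x \<in> \<Union>K" for x
  proof -
    obtain S where "S \<in> K" "x \<in> S" using xK by blast
    then obtain V where "V\<in>order_basic_sets L r" "x \<in> V" "V \<subseteq> S" using K unfolding lots_open_def by blast
    then show ?thesis using \<open>S \<in> K\<close> by blast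
  qed
  ultimately show "lots_open L r (\<Union>K)" unfolding lots_open_def by blast
qed

definition lots_top :: "'b set \<Rightarrow> 'b rel \<Rightarrow> 'b topology" where
  "lots_top L r = topology (lots_open L r)"

lemma openin_lots_top:
  assumes "linear_order_on L r"
  shows "openin (lots_top L r) U \<longleftrightarrow> lots_open L r U"
  using istopology_lots[OF assms] unfolding lots_top_def by (simp add: topology_inverse')

lemma topspace_lots_top:
  assumes "linear_order_on L r"
  shows "topspace (lots_top L r) = L"
proof -
  have "L \<in> order_basic_sets L r" unfolding order_basic_sets_def by simp
  then have "lots_open L r L" unfolding lots_open_def by blast
  moreover have "\<And>U. lots_open L r U \<Longrightarrow> U \<subseteq> L" unfolding lots_open_def by blast
  ultimately show ?thesis unfolding topspace_def openin_lots_top[OF assms] by (intro equalityI Union_least) auto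
qed

lemma LOTS_lots_top:
  assumes "linear_order_on L r"
  shows "LOTS (lots_top L r)"
  unfolding LOTS_def topspace_lots_top[OF assms] openin_lots_top[OF assms]
  by (intro exI[of _ r] conjI assms allI) (simp add: lots_open_def)




locale cone_sys =
  fixes Y :: "'b topology" and J :: "'j set" and w :: "'j rel"
    and c :: "'j \<Rightarrow> 'b \<Rightarrow> 'b set" and so :: "'b set rel"
  assumes WO: "Well_order w" and FJ: "Field w = J"
    and SO: "Well_order so" and FSO: "Field so = UNIV"
    and cin: "\<And>\<alpha> x. \<alpha>\<in>J \<Longrightarrow> x\<in>topspace Y \<Longrightarrow> x \<in> c \<alpha> x"
    and csub: "\<And>\<alpha> x. \<alpha>\<in>J \<Longrightarrow> x\<in>topspace Y \<Longrightarrow> c \<alpha> x \<subseteq> topspace Y"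
    and copen: "\<And>\<alpha> x. \<alpha>\<in>J \<Longrightarrow> x\<in>topspace Y \<Longrightarrow> openin Y (c \<alpha> x)"
    and cpart: "\<And>\<alpha> x y. \<alpha>\<in>J \<Longrightarrow> x\<in>topspace Y \<Longrightarrow> y \<in> c \<alpha> x \<Longrightarrow> c \<alpha> y = c \<alpha> x"
    and cmono: "\<And>\<alpha> \<beta> x. (\<alpha>,\<beta>)\<in>w \<Longrightarrow> x\<in>topspace Y \<Longrightarrow> c \<beta> x \<subseteq> c \<alpha> x"
    and cbase: "\<And>U x. openin Y U \<Longrightarrow> x\<in>U \<Longrightarrow> \<exists>\<alpha>\<in>J. c \<alpha> x \<subseteq> U"
    and csep: "\<And>x y. x\<in>topspace Y \<Longrightarrow> y\<in>topspace Y \<Longrightarrow> x\<noteq>y \<Longrightarrow> \<exists>\<alpha>\<in>J. y \<notin> c \<alpha> x"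
begin

sublocale W: wo_rel w using WO unfolding wo_rel_def .

lemma w_trans: "(a,b)\<in>w \<Longrightarrow> (b,c')\<in>w \<Longrightarrow> (a,c')\<in>w"
  using W.TRANS unfolding trans_def by blast
lemma w_antisym: "(a,b)\<in>w \<Longrightarrow> (b,a)\<in>w \<Longrightarrow> a = b"
  using W.ANTISYM unfolding antisym_def by blast
lemma w_total: "a\<in>J \<Longrightarrow> b\<in>J \<Longrightarrow> (a,b)\<in>w \<or> (b,a)\<in>w"
  using W.TOTALS FJ by blast
lemma w_field: "(a,b)\<in>w \<Longrightarrow> a \<in> J \<and> b \<in> J"
  using FJ unfolding Field_def by blast

lemma so_lin: "linear_order_on UNIV so"
  using SO FSO unfolding well_order_on_def by simp
lemma so_trans: "(A,B)\<in>so \<Longrightarrow> (B,C)\<in>so \<Longrightarrow> (A,C)\<in>so"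
  using so_lin unfolding linear_order_on_def partial_order_on_def preorder_on_def trans_def by blast
lemma so_antisym: "(A,B)\<in>so \<Longrightarrow> (B,A)\<in>so \<Longrightarrow> A = B"
  using so_lin unfolding linear_order_on_def partial_order_on_def antisym_def by blast
lemma so_total: "A \<noteq> B \<Longrightarrow> (A,B)\<in>so \<or> (B,A)\<in>so"
  using so_lin unfolding linear_order_on_def total_on_def by blast

definition D where "D x y = {\<alpha>\<in>J. c \<alpha> x \<noteq> c \<alpha> y}"
definition dl where "dl x y = W.minim (D x y)"
definition lt where "lt x y \<longleftrightarrow> x \<noteq> y \<and> (c (dl x y) x, c (dl x y) y) \<in> so"

lemma D_sym: "D x y = D y x" unfolding D_def by auto
lemma dl_sym: "dl x y = dl y x" unfolding dl_def using D_sym by simp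

lemma D_sub: "D x y \<subseteq> Field w" using FJ unfolding D_def by auto

lemma D_ne:
  assumes "x \<in> topspace Y" "y \<in> topspace Y" "x \<noteq> y"
  shows "D x y \<noteq> {}"
proof -
  obtain \<alpha> where a: "\<alpha>\<in>J" "y \<notin> c \<alpha> x" using csep[OF assms] by blast
  then have "c \<alpha> x \<noteq> c \<alpha> y" using cin[OF a(1) assms(2)] by auto
  then show ?thesis using a unfolding D_def by blast
qed

lemma dl_D:
  assumes "x \<in> topspace Y" "y \<in> topspace Y" "x \<noteq> y"
  shows "dl x y \<in> J" "c (dl x y) x \<noteq> c (dl x y) y"
  using W.minim_in[OF D_sub D_ne[OF assms]] unfolding dl_def D_def by auto

lemma dl_le: "\<alpha> \<in> D x y \<Longrightarrow> (dl x y, \<alpha>) \<in> w"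
  unfolding dl_def using W.minim_least[OF D_sub] by blast

lemma dl_below:
  assumes "\<beta> \<in> J" "(\<beta>, dl x y) \<in> w" "\<beta> \<noteq> dl x y"
  shows "c \<beta> x = c \<beta> y"
proof (rule ccontr)
  assume "c \<beta> x \<noteq> c \<beta> y"
  then have "\<beta> \<in> D x y" using assms unfolding D_def by blast
  then have "(dl x y, \<beta>) \<in> w" by (rule dl_le)
  then show False using assms w_antisym by blast
qed

lemma dl_char:
  assumes "x \<in> topspace Y" "y \<in> topspace Y" "\<mu> \<in> J" "c \<mu> x \<noteq> c \<mu> y"
    and "\<And>\<beta>. \<beta> \<in> J \<Longrightarrow> (\<beta>,\<mu>)\<in>w \<Longrightarrow> \<beta> \<noteq> \<mu> \<Longrightarrow> c \<beta> x = c \<beta> y"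
  shows "dl x y = \<mu>"
proof -
  have xy: "x \<noteq> y" using assms(4) by blast
  have "\<mu> \<in> D x y" using assms unfolding D_def by blast
  then have 1: "(dl x y, \<mu>) \<in> w" by (rule dl_le)
  show ?thesis
  proof (rule ccontr)
    assume "dl x y \<noteq> \<mu>"
    then have "c (dl x y) x = c (dl x y) y" using assms(5)[OF _ 1] dl_D(1)[OF assms(1,2) xy] by blast
    then show False using dl_D(2)[OF assms(1,2) xy] by blast
  qed
qed

lemma cpart': "\<alpha>\<in>J \<Longrightarrow> x\<in>topspace Y \<Longrightarrow> y \<in> c \<alpha> x \<Longrightarrow> y \<in> topspace Y"
  using csub by blast

lemma lt_total:
  assumes "x \<in> topspace Y" "y \<in> topspace Y" "x \<noteq> y"
  shows "lt x y \<or> lt y x"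
  using dl_D(2)[OF assms] so_total dl_sym assms(3) unfolding lt_def by metis

lemma lt_irrefl: "\<not> lt x x" unfolding lt_def by simp

lemma lt_asym:
  assumes "x \<in> topspace Y" "y \<in> topspace Y" "lt x y"
  shows "\<not> lt y x"
proof
  assume "lt y x"
  then have "(c (dl x y) y, c (dl x y) x) \<in> so" unfolding lt_def using dl_sym by metis
  moreover have "(c (dl x y) x, c (dl x y) y) \<in> so" "x \<noteq> y" using assms(3) unfolding lt_def by auto
  ultimately show False using so_antisym dl_D(2)[OF assms(1,2)] by metis
qed

lemma lt_trans:
  assumes xY: "x \<in> topspace Y" and yY: "y \<in> topspace Y" and zY: "z \<in> topspace Y"
    and xy: "lt x y" and yz: "lt y z"
  shows "lt x z"
proof -
  have nxy: "x \<noteq> y" and nyz: "y \<noteq> z" using xy yz unfolding lt_def by auto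
  define \<mu>1 where "\<mu>1 = dl x y"
  define \<mu>2 where "\<mu>2 = dl y z"
  have m1: "\<mu>1 \<in> J" "c \<mu>1 x \<noteq> c \<mu>1 y" "(c \<mu>1 x, c \<mu>1 y) \<in> so"
    using dl_D[OF xY yY nxy] xy unfolding \<mu>1_def lt_def by auto
  have m2: "\<mu>2 \<in> J" "c \<mu>2 y \<noteq> c \<mu>2 z" "(c \<mu>2 y, c \<mu>2 z) \<in> so"
    using dl_D[OF yY zY nyz] yz unfolding \<mu>2_def lt_def by auto
  have b1: "\<And>\<beta>. \<beta>\<in>J \<Longrightarrow> (\<beta>,\<mu>1)\<in>w \<Longrightarrow> \<beta>\<noteq>\<mu>1 \<Longrightarrow> c \<beta> x = c \<beta> y"
    using dl_below unfolding \<mu>1_def by blast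
  have b2: "\<And>\<beta>. \<beta>\<in>J \<Longrightarrow> (\<beta>,\<mu>2)\<in>w \<Longrightarrow> \<beta>\<noteq>\<mu>2 \<Longrightarrow> c \<beta> y = c \<beta> z"
    using dl_below unfolding \<mu>2_def by blast
  have fin: "lt x z" if "\<mu> \<in> J" "c \<mu> x \<noteq> c \<mu> z" "(c \<mu> x, c \<mu> z) \<in> so"
      "\<And>\<beta>. \<beta>\<in>J \<Longrightarrow> (\<beta>,\<mu>)\<in>w \<Longrightarrow> \<beta>\<noteq>\<mu> \<Longrightarrow> c \<beta> x = c \<beta> z" for \<mu>
  proof -
    have "dl x z = \<mu>" using dl_char[OF xY zY that(1,2)] that(4) by blast
    then show ?thesis unfolding lt_def using that by auto
  qed
  consider "\<mu>1 = \<mu>2" | "(\<mu>1,\<mu>2)\<in>w" "\<mu>1\<noteq>\<mu>2" | "(\<mu>2,\<mu>1)\<in>w" "\<mu>1\<noteq>\<mu>2"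
    using w_total[OF m1(1) m2(1)] by blast
  then show ?thesis
  proof cases
    case 1
    have so: "(c \<mu>1 x, c \<mu>1 z) \<in> so" using so_trans m1(3) m2(3) 1 by auto
    have ne: "c \<mu>1 x \<noteq> c \<mu>1 z"
    proof
      assume "c \<mu>1 x = c \<mu>1 z"
      then have "(c \<mu>1 y, c \<mu>1 x) \<in> so" using m2(3) 1 by simp
      then show False using so_antisym m1(2,3) by blast
    qed
    show ?thesis using fin[OF m1(1) ne so] b1 b2 1 by metis
  next
    case 2
    have e: "c \<mu>1 y = c \<mu>1 z" using b2[OF m1(1) 2] .
    show ?thesis
    proof (rule fin[OF m1(1)])
      show "c \<mu>1 x \<noteq> c \<mu>1 z" "(c \<mu>1 x, c \<mu>1 z) \<in> so" using m1 e by auto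
      fix \<beta> assume "\<beta>\<in>J" "(\<beta>,\<mu>1)\<in>w" "\<beta>\<noteq>\<mu>1"
      moreover have "(\<beta>,\<mu>2)\<in>w" using w_trans \<open>(\<beta>,\<mu>1)\<in>w\<close> 2(1) by blast
      moreover have "\<beta>\<noteq>\<mu>2" using w_antisym \<open>(\<beta>,\<mu>1)\<in>w\<close> 2 by blast
      ultimately show "c \<beta> x = c \<beta> z" using b1 b2 by metis
    qed
  next
    case 3
    have e: "c \<mu>2 x = c \<mu>2 y" using b1[OF m2(1) 3(1)] 3(2) by metis
    show ?thesis
    proof (rule fin[OF m2(1)])
      show "c \<mu>2 x \<noteq> c \<mu>2 z" "(c \<mu>2 x, c \<mu>2 z) \<in> so" using m2 e by auto
      fix \<beta> assume "\<beta>\<in>J" "(\<beta>,\<mu>2)\<in>w" "\<beta>\<noteq>\<mu>2"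
      moreover have "(\<beta>,\<mu>1)\<in>w" using w_trans \<open>(\<beta>,\<mu>2)\<in>w\<close> 3(1) by blast
      moreover have "\<beta>\<noteq>\<mu>1" using w_antisym \<open>(\<beta>,\<mu>2)\<in>w\<close> 3 by blast
      ultimately show "c \<beta> x = c \<beta> z" using b1 b2 by metis
    qed
  qed
qed

lemma cone_dl:
  assumes aY: "a \<in> topspace Y" and zY: "z \<in> topspace Y" and az: "a \<noteq> z"
    and w': "v \<in> c (dl a z) z"
  shows "v \<in> topspace Y" "dl a v = dl a z" "c (dl a z) v = c (dl a z) z"
proof -
  define \<mu> where "\<mu> = dl a z"
  have m: "\<mu> \<in> J" "c \<mu> a \<noteq> c \<mu> z" using dl_D[OF aY zY az] unfolding \<mu>_def by auto
  show vY: "v \<in> topspace Y" using csub[OF m(1) zY] w' unfolding \<mu>_def by blast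
  show cv: "c (dl a z) v = c (dl a z) z" using cpart[OF m(1) zY] w' unfolding \<mu>_def by blast
  show "dl a v = dl a z" unfolding \<mu>_def[symmetric]
  proof (rule dl_char[OF aY vY m(1)])
    show "c \<mu> a \<noteq> c \<mu> v" using m cv unfolding \<mu>_def by simp
    fix \<beta> assume b: "\<beta> \<in> J" "(\<beta>,\<mu>)\<in>w" "\<beta> \<noteq> \<mu>"
    have "v \<in> c \<beta> z" using cmono[OF b(2) zY] w' unfolding \<mu>_def by blast
    then have "c \<beta> v = c \<beta> z" using cpart[OF b(1) zY] by blast
    moreover have "c \<beta> a = c \<beta> z" using dl_below[OF b(1)] b unfolding \<mu>_def by blast
    ultimately show "c \<beta> a = c \<beta> v" by simp
  qed
qed

lemma lt_cone_above:
  assumes "a \<in> topspace Y" "z \<in> topspace Y" "lt a z" "v \<in> c (dl a z) z"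
  shows "lt a v"
proof -
  have az: "a \<noteq> z" using assms(3) unfolding lt_def by simp
  note cd = cone_dl[OF assms(1,2) az assms(4)]
  have "c (dl a z) a \<noteq> c (dl a z) v" using dl_D(2)[OF assms(1,2) az] cd(3) by simp
  then show ?thesis using assms(3) cd unfolding lt_def by auto
qed

lemma lt_cone_below:
  assumes "b \<in> topspace Y" "z \<in> topspace Y" "lt z b" "v \<in> c (dl z b) z"
  shows "lt v b"
proof -
  have az: "b \<noteq> z" using assms(3) unfolding lt_def by auto
  have v: "v \<in> c (dl b z) z" using assms(4) dl_sym by simp
  note cd = cone_dl[OF assms(1,2) az v]
  have "c (dl b z) b \<noteq> c (dl b z) v" using dl_D(2)[OF assms(1,2) az] cd(3) by simp
  then show ?thesis using assms(3) cd dl_sym unfolding lt_def by metis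
qed


lemma convex:
  assumes a: "\<alpha> \<in> J" and xY: "x \<in> topspace Y" and y1: "y1 \<in> c \<alpha> x" and y2: "y2 \<in> c \<alpha> x"
    and yY: "y \<in> topspace Y" and l1: "lt y1 y" and l2: "lt y y2"
  shows "y \<in> c \<alpha> x"
proof (rule ccontr)
  assume yn: "y \<notin> c \<alpha> x"
  have y1Y: "y1 \<in> topspace Y" and y2Y: "y2 \<in> topspace Y" using csub[OF a xY] y1 y2 by auto
  have e1: "c \<alpha> y1 = c \<alpha> x" and e2: "c \<alpha> y2 = c \<alpha> x" using cpart[OF a xY] y1 y2 by auto
  have ny1: "y1 \<noteq> y" and ny2: "y \<noteq> y2" using l1 l2 unfolding lt_def by auto
  have "c \<alpha> y1 \<noteq> c \<alpha> y" using cin[OF a yY] yn e1 by auto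
  then have "\<alpha> \<in> D y1 y" using a unfolding D_def by blast
  then have mu: "(dl y1 y, \<alpha>) \<in> w" by (rule dl_le)
  have "c \<alpha> y \<noteq> c \<alpha> y2" using cin[OF a yY] yn e2 by auto
  then have "\<alpha> \<in> D y y2" using a unfolding D_def by blast
  then have nu: "(dl y y2, \<alpha>) \<in> w" by (rule dl_le)
  have agree: "c \<beta> y1 = c \<beta> y2" if "(\<beta>,\<alpha>)\<in>w" for \<beta>
  proof -
    have b: "\<beta> \<in> J" using w_field[OF that] by simp
    have "y1 \<in> c \<beta> x" "y2 \<in> c \<beta> x" using cmono[OF that xY] y1 y2 by auto
    then show ?thesis using cpart[OF b xY] by simp
  qed
  define \<mu> where "\<mu> = dl y1 y"
  define \<nu> where "\<nu> = dl y y2"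
  have m: "\<mu> \<in> J" "c \<mu> y1 \<noteq> c \<mu> y" "(c \<mu> y1, c \<mu> y) \<in> so"
    using dl_D[OF y1Y yY ny1] l1 unfolding \<mu>_def lt_def by auto
  have n: "\<nu> \<in> J" "c \<nu> y \<noteq> c \<nu> y2" "(c \<nu> y, c \<nu> y2) \<in> so"
    using dl_D[OF yY y2Y ny2] l2 unfolding \<nu>_def lt_def by auto
  consider "\<mu> = \<nu>" | "(\<mu>,\<nu>)\<in>w" "\<mu>\<noteq>\<nu>" | "(\<nu>,\<mu>)\<in>w" "\<mu>\<noteq>\<nu>"
    using w_total[OF m(1) n(1)] by blast
  then show False
  proof cases
    case 1
    have "c \<mu> y2 = c \<mu> y1" using agree mu unfolding \<mu>_def by simp
    then show False using m n 1 so_antisym by metis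
  next
    case 2
    have "c \<mu> y = c \<mu> y2" using dl_below[OF m(1)] 2 unfolding \<nu>_def by blast
    moreover have "c \<mu> y2 = c \<mu> y1" using agree mu unfolding \<mu>_def by simp
    ultimately show False using m by simp
  next
    case 3
    have "c \<nu> y1 = c \<nu> y" using dl_below[OF n(1)] 3 unfolding \<mu>_def by blast
    moreover have "c \<nu> y2 = c \<nu> y1" using agree nu unfolding \<nu>_def by simp
    ultimately show False using n by simp
  qed
qed

lemma gt_open: "a \<in> topspace Y \<Longrightarrow> openin Y {z \<in> topspace Y. lt a z}"
proof (subst openin_subopen, intro ballI)
  fix z assume aY: "a \<in> topspace Y" and z: "z \<in> {z \<in> topspace Y. lt a z}"
  then have zY: "z \<in> topspace Y" and az: "lt a z" by auto
  have ne: "a \<noteq> z" using az unfolding lt_def by simp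
  show "\<exists>T. openin Y T \<and> z \<in> T \<and> T \<subseteq> {z \<in> topspace Y. lt a z}"
  proof (intro exI conjI)
    show "openin Y (c (dl a z) z)" "z \<in> c (dl a z) z" using copen cin dl_D(1)[OF aY zY ne] zY by auto
    show "c (dl a z) z \<subseteq> {z \<in> topspace Y. lt a z}"
      using lt_cone_above[OF aY zY az] csub[OF dl_D(1)[OF aY zY ne] zY] by blast
  qed
qed

lemma lt_open: "b \<in> topspace Y \<Longrightarrow> openin Y {z \<in> topspace Y. lt z b}"
proof (subst openin_subopen, intro ballI)
  fix z assume bY: "b \<in> topspace Y" and z: "z \<in> {z \<in> topspace Y. lt z b}"
  then have zY: "z \<in> topspace Y" and az: "lt z b" by auto
  have ne: "z \<noteq> b" using az unfolding lt_def by simp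
  show "\<exists>T. openin Y T \<and> z \<in> T \<and> T \<subseteq> {z \<in> topspace Y. lt z b}"
  proof (intro exI conjI)
    show "openin Y (c (dl z b) z)" "z \<in> c (dl z b) z" using copen cin dl_D(1)[OF zY bY ne] zY by auto
    show "c (dl z b) z \<subseteq> {z \<in> topspace Y. lt z b}"
      using lt_cone_below[OF bY zY az] csub[OF dl_D(1)[OF zY bY ne] zY] by blast
  qed
qed

lemma min_open:
  assumes a: "\<alpha> \<in> J" and xY: "x \<in> topspace Y" and mn: "\<forall>y\<in>c \<alpha> x. \<not> lt y x"
  shows "openin Y {z \<in> topspace Y. z = x \<or> lt x z}"
proof (subst openin_subopen, intro ballI)
  fix z assume z: "z \<in> {z \<in> topspace Y. z = x \<or> lt x z}"
  then have zY: "z \<in> topspace Y" by auto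
  show "\<exists>T. openin Y T \<and> z \<in> T \<and> T \<subseteq> {z \<in> topspace Y. z = x \<or> lt x z}"
  proof (cases "z \<in> c \<alpha> x")
    case True
    show ?thesis
    proof (intro exI conjI)
      show "openin Y (c \<alpha> x)" using copen[OF a xY] .
      show "z \<in> c \<alpha> x" by fact
      show "c \<alpha> x \<subseteq> {z \<in> topspace Y. z = x \<or> lt x z}"
        using csub[OF a xY] mn lt_total[OF xY] by blast
    qed
  next
    case False
    then have az: "lt x z" using z cin[OF a xY] by auto
    have ne: "x \<noteq> z" using az unfolding lt_def by simp
    show ?thesis
    proof (intro exI conjI)
      show "openin Y (c (dl x z) z)" "z \<in> c (dl x z) z" using copen cin dl_D(1)[OF xY zY ne] zY by auto
      show "c (dl x z) z \<subseteq> {z \<in> topspace Y. z = x \<or> lt x z}"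
        using lt_cone_above[OF xY zY az] csub[OF dl_D(1)[OF xY zY ne] zY] by blast
    qed
  qed
qed

lemma max_open:
  assumes a: "\<alpha> \<in> J" and xY: "x \<in> topspace Y" and mn: "\<forall>y\<in>c \<alpha> x. \<not> lt x y"
  shows "openin Y {z \<in> topspace Y. z = x \<or> lt z x}"
proof (subst openin_subopen, intro ballI)
  fix z assume z: "z \<in> {z \<in> topspace Y. z = x \<or> lt z x}"
  then have zY: "z \<in> topspace Y" by auto
  show "\<exists>T. openin Y T \<and> z \<in> T \<and> T \<subseteq> {z \<in> topspace Y. z = x \<or> lt z x}"
  proof (cases "z \<in> c \<alpha> x")
    case True
    show ?thesis
    proof (intro exI conjI)
      show "openin Y (c \<alpha> x)" using copen[OF a xY] .
      show "z \<in> c \<alpha> x" by fact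
      show "c \<alpha> x \<subseteq> {z \<in> topspace Y. z = x \<or> lt z x}"
        using csub[OF a xY] mn lt_total[OF xY] by blast
    qed
  next
    case False
    then have az: "lt z x" using z cin[OF a xY] by auto
    have ne: "z \<noteq> x" using az unfolding lt_def by simp
    show ?thesis
    proof (intro exI conjI)
      show "openin Y (c (dl z x) z)" "z \<in> c (dl z x) z" using copen cin dl_D(1)[OF zY xY ne] zY by auto
      show "c (dl z x) z \<subseteq> {z \<in> topspace Y. z = x \<or> lt z x}"
        using lt_cone_below[OF xY zY az] csub[OF dl_D(1)[OF zY xY ne] zY] by blast
    qed
  qed
qed


definition Lset :: "('b \<times> int) set" where
  "Lset = {(y,k). y \<in> topspace Y \<and> (k = 0 \<or> (k = -1 \<and> openin Y {z \<in> topspace Y. z = y \<or> lt y z})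
             \<or> (k = 1 \<and> openin Y {z \<in> topspace Y. z = y \<or> lt z y}))}"

definition Llt :: "'b \<times> int \<Rightarrow> 'b \<times> int \<Rightarrow> bool" where
  "Llt p q \<longleftrightarrow> lt (fst p) (fst q) \<or> (fst p = fst q \<and> snd p < snd q)"

definition Lr :: "('b \<times> int) rel" where
  "Lr = {(p,q). p \<in> Lset \<and> q \<in> Lset \<and> (Llt p q \<or> p = q)}"

lemma Lset_fst: "p \<in> Lset \<Longrightarrow> fst p \<in> topspace Y" unfolding Lset_def by auto

lemma Llt_irrefl: "\<not> Llt p p" unfolding Llt_def using lt_irrefl by auto

lemma Llt_trans: "p \<in> Lset \<Longrightarrow> q \<in> Lset \<Longrightarrow> s \<in> Lset \<Longrightarrow> Llt p q \<Longrightarrow> Llt q s \<Longrightarrow> Llt p s"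
proof -
  assume h: "p \<in> Lset" "q \<in> Lset" "s \<in> Lset" "Llt p q" "Llt q s"
  have Y: "fst p \<in> topspace Y" "fst q \<in> topspace Y" "fst s \<in> topspace Y" using h Lset_fst by auto
  show "Llt p s" using h(4,5) lt_trans[OF Y] unfolding Llt_def by auto
qed

lemma Llt_asym: "p \<in> Lset \<Longrightarrow> q \<in> Lset \<Longrightarrow> Llt p q \<Longrightarrow> \<not> Llt q p"
  using Llt_trans Llt_irrefl by blast

lemma Llt_total: "p \<in> Lset \<Longrightarrow> q \<in> Lset \<Longrightarrow> p \<noteq> q \<Longrightarrow> Llt p q \<or> Llt q p"
proof -
  assume h: "p \<in> Lset" "q \<in> Lset" "p \<noteq> q"
  have Y: "fst p \<in> topspace Y" "fst q \<in> topspace Y" using h Lset_fst by auto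
  show "Llt p q \<or> Llt q p"
  proof (cases "fst p = fst q")
    case True
    then have "snd p \<noteq> snd q" using h(3) prod_eq_iff by blast
    then show ?thesis using True unfolding Llt_def by auto
  next
    case False
    then show ?thesis using lt_total[OF Y False] unfolding Llt_def by auto
  qed
qed

lemma lin_L: "linear_order_on Lset Lr"
  unfolding linear_order_on_def partial_order_on_def preorder_on_def
proof (intro conjI)
  show "Lr \<subseteq> Lset \<times> Lset" unfolding Lr_def by auto
  show "refl_on Lset Lr" unfolding refl_on_def Lr_def by auto
  show "trans Lr" unfolding trans_def
  proof (intro allI impI)
    fix x y z assume "(x,y) \<in> Lr" "(y,z) \<in> Lr"
    then show "(x,z) \<in> Lr" unfolding Lr_def using Llt_trans[of x y z] by auto
  qed
  show "antisym Lr" unfolding antisym_def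
  proof (intro allI impI)
    fix x y assume "(x,y) \<in> Lr" "(y,x) \<in> Lr"
    then show "x = y" unfolding Lr_def using Llt_asym[of x y] by auto
  qed
  show "total_on Lset Lr" unfolding total_on_def
  proof (intro ballI impI)
    fix x y assume "x \<in> Lset" "y \<in> Lset" "x \<noteq> y"
    then show "(x,y) \<in> Lr \<or> (y,x) \<in> Lr" unfolding Lr_def using Llt_total[of x y] by auto
  qed
qed

lemma Lr_strict: "((p,q) \<in> Lr \<and> p \<noteq> q) \<longleftrightarrow> p \<in> Lset \<and> q \<in> Lset \<and> Llt p q"
proof
  assume "(p,q) \<in> Lr \<and> p \<noteq> q" then show "p \<in> Lset \<and> q \<in> Lset \<and> Llt p q" unfolding Lr_def by auto
next
  assume h: "p \<in> Lset \<and> q \<in> Lset \<and> Llt p q"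
  then have "p \<noteq> q" using Llt_irrefl by metis
  then show "(p,q) \<in> Lr \<and> p \<noteq> q" using h unfolding Lr_def by simp
qed

lemma zero_in_L: "y \<in> topspace Y \<Longrightarrow> (y,0) \<in> Lset" unfolding Lset_def by simp

lemma lo_pre:
  assumes "lo \<in> LO Lset Lr"
  shows "openin Y {y \<in> topspace Y. lo (y,0)}"
proof -
  consider "lo = (\<lambda>x. True)" | q where "q \<in> Lset" "lo = (\<lambda>x. (q,x)\<in>Lr \<and> q\<noteq>x)"
    using assms unfolding LO_def by blast
  then show ?thesis
  proof cases
    case 1 then show ?thesis by simp
  next
    case 2
    obtain a i where q: "q = (a,i)" by force
    have aY: "a \<in> topspace Y" using 2 q Lset_fst by force
    have eq: "{y \<in> topspace Y. lo (y,0)} = {y \<in> topspace Y. lt a y \<or> (a = y \<and> i < 0)}"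
      using 2 q zero_in_L Lr_strict unfolding Llt_def by auto
    show ?thesis
    proof (cases "i < 0")
      case True
      then have "i = -1" "openin Y {z \<in> topspace Y. z = a \<or> lt a z}" using 2 q unfolding Lset_def by auto
      moreover have "{y \<in> topspace Y. lt a y \<or> (a = y \<and> i < 0)} = {z \<in> topspace Y. z = a \<or> lt a z}"
        using True by auto
      ultimately show ?thesis using eq by simp
    next
      case False
      then show ?thesis using eq gt_open[OF aY] by simp
    qed
  qed
qed

lemma hi_pre:
  assumes "hi \<in> HI Lset Lr"
  shows "openin Y {y \<in> topspace Y. hi (y,0)}"
proof -
  consider "hi = (\<lambda>x. True)" | q where "q \<in> Lset" "hi = (\<lambda>x. (x,q)\<in>Lr \<and> x\<noteq>q)"
    using assms unfolding HI_def by blast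
  then show ?thesis
  proof cases
    case 1 then show ?thesis by simp
  next
    case 2
    obtain a i where q: "q = (a,i)" by force
    have aY: "a \<in> topspace Y" using 2 q Lset_fst by force
    have eq: "{y \<in> topspace Y. hi (y,0)} = {y \<in> topspace Y. lt y a \<or> (a = y \<and> 0 < i)}"
      using 2 q zero_in_L Lr_strict unfolding Llt_def by auto
    show ?thesis
    proof (cases "0 < i")
      case True
      then have "i = 1" "openin Y {z \<in> topspace Y. z = a \<or> lt z a}" using 2 q unfolding Lset_def by auto
      moreover have "{y \<in> topspace Y. lt y a \<or> (a = y \<and> 0 < i)} = {z \<in> topspace Y. z = a \<or> lt z a}"
        using True by auto
      ultimately show ?thesis using eq by simp
    next
      case False
      then show ?thesis using eq lt_open[OF aY] by simp
    qed
  qed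
qed

lemma obs_pre:
  assumes "V \<in> order_basic_sets Lset Lr"
  shows "openin Y {y \<in> topspace Y. (y,0) \<in> V}"
proof -
  obtain lo hi where h: "lo \<in> LO Lset Lr" "hi \<in> HI Lset Lr" "V = {x\<in>Lset. lo x \<and> hi x}"
    using obs_repr[OF assms] by blast
  have "{y \<in> topspace Y. (y,0) \<in> V} = {y \<in> topspace Y. lo (y,0)} \<inter> {y \<in> topspace Y. hi (y,0)}"
    using h(3) zero_in_L by auto
  then show ?thesis using lo_pre[OF h(1)] hi_pre[OF h(2)] by auto
qed

lemma interval_exists:
  assumes a: "\<alpha> \<in> J" and xY: "x \<in> topspace Y"
  shows "\<exists>p\<in>Lset. \<exists>q\<in>Lset. Llt p (x,0) \<and> Llt (x,0) q \<and>
           (\<forall>y\<in>topspace Y. Llt p (y,0) \<and> Llt (y,0) q \<longrightarrow> y \<in> c \<alpha> x)"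
proof -
  have xC: "x \<in> c \<alpha> x" using cin[OF a xY] .
  obtain p where p: "p \<in> Lset" "Llt p (x,0)"
    "\<And>y. y \<in> topspace Y \<Longrightarrow> Llt p (y,0) \<Longrightarrow> y = x \<or> (\<exists>l\<in>c \<alpha> x. lt l y)"
  proof (cases "\<exists>y0\<in>c \<alpha> x. lt y0 x")
    case True
    then obtain y0 where y0: "y0 \<in> c \<alpha> x" "lt y0 x" by blast
    have "y0 \<in> topspace Y" using csub[OF a xY] y0 by blast
    then show ?thesis using y0 by (intro that[of "(y0,0)"]) (auto simp: zero_in_L Llt_def)
  next
    case False
    then have "(x,-1) \<in> Lset" using min_open[OF a xY] xY unfolding Lset_def by auto
    then show ?thesis using xC by (intro that[of "(x,-1)"]) (auto simp: Llt_def)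
  qed
  obtain q where q: "q \<in> Lset" "Llt (x,0) q"
    "\<And>y. y \<in> topspace Y \<Longrightarrow> Llt (y,0) q \<Longrightarrow> y = x \<or> (\<exists>u\<in>c \<alpha> x. lt y u)"
  proof (cases "\<exists>y0\<in>c \<alpha> x. lt x y0")
    case True
    then obtain y0 where y0: "y0 \<in> c \<alpha> x" "lt x y0" by blast
    have "y0 \<in> topspace Y" using csub[OF a xY] y0 by blast
    then show ?thesis using y0 by (intro that[of "(y0,0)"]) (auto simp: zero_in_L Llt_def)
  next
    case False
    then have "(x,1) \<in> Lset" using max_open[OF a xY] xY unfolding Lset_def by auto
    then show ?thesis using xC by (intro that[of "(x,1)"]) (auto simp: Llt_def)
  qed
  show ?thesis
  proof (intro bexI conjI ballI impI)
    fix y assume yY: "y \<in> topspace Y" and h: "Llt p (y,0) \<and> Llt (y,0) q"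
    show "y \<in> c \<alpha> x"
    proof (cases "y = x")
      case True then show ?thesis using xC by simp
    next
      case False
      then obtain l u where "l \<in> c \<alpha> x" "lt l y" "u \<in> c \<alpha> x" "lt y u" using p(3)[OF yY] q(3)[OF yY] h by blast
      then show ?thesis using convex[OF a xY _ _ yY] by blast
    qed
  qed (use p q in auto)
qed

definition LT where "LT = lots_top Lset Lr"
definition SS where "SS = (\<lambda>y. (y, 0::int)) ` topspace Y"

lemma SS_sub: "SS \<subseteq> topspace LT"
  unfolding LT_def topspace_lots_top[OF lin_L] SS_def using zero_in_L by auto

lemma hom: "homeomorphic_map Y (subtopology LT SS) (\<lambda>y. (y,0))"
proof (rule bijective_open_imp_homeomorphic_map)
  have tS: "topspace (subtopology LT SS) = SS" using SS_sub by auto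
  show "(\<lambda>y. (y, 0::int)) ` topspace Y = topspace (subtopology LT SS)" using tS SS_def by simp
  show "inj_on (\<lambda>y. (y, 0::int)) (topspace Y)" by (auto simp: inj_on_def)
  show "continuous_map Y (subtopology LT SS) (\<lambda>y. (y, 0))"
    unfolding continuous_map
  proof (intro conjI allI impI)
    show "(\<lambda>y. (y, 0::int)) ` topspace Y \<subseteq> topspace (subtopology LT SS)" using tS SS_def by simp
    fix U assume "openin (subtopology LT SS) U"
    then obtain U' where U': "openin LT U'" "U = U' \<inter> SS" by (auto simp: openin_subtopology)
    have lo: "lots_open Lset Lr U'" using U'(1) openin_lots_top[OF lin_L] unfolding LT_def by blast
    have eq: "{x \<in> topspace Y. (x, 0) \<in> U} = {x \<in> topspace Y. (x, 0) \<in> U'}"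
      using U'(2) SS_def by auto
    show "openin Y {x \<in> topspace Y. (x, 0) \<in> U}"
      unfolding eq
    proof (subst openin_subopen, intro ballI)
      fix x assume "x \<in> {x \<in> topspace Y. (x, 0::int) \<in> U'}"
      then obtain V where V: "V \<in> order_basic_sets Lset Lr" "(x,0) \<in> V" "V \<subseteq> U'" "x \<in> topspace Y"
        using lo unfolding lots_open_def by blast
      show "\<exists>T. openin Y T \<and> x \<in> T \<and> T \<subseteq> {x \<in> topspace Y. (x, 0) \<in> U'}"
        by (rule exI[of _ "{y \<in> topspace Y. (y,0) \<in> V}"]) (use V obs_pre[OF V(1)] in auto)
    qed
  qed
  show "open_map Y (subtopology LT SS) (\<lambda>y. (y, 0))"
    unfolding open_map_def
  proof (intro allI impI)
    fix U assume U: "openin Y U"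
    define U' where "U' = \<Union>{V \<in> order_basic_sets Lset Lr. V \<inter> SS \<subseteq> (\<lambda>y. (y, 0::int)) ` U}"
    have "lots_open Lset Lr U'" unfolding lots_open_def U'_def using obs_sub by blast
    then have oU': "openin LT U'" unfolding LT_def openin_lots_top[OF lin_L] .
    have "(\<lambda>y. (y, 0::int)) ` U = U' \<inter> SS"
    proof
      show "U' \<inter> SS \<subseteq> (\<lambda>y. (y, 0::int)) ` U" unfolding U'_def by blast
      show "(\<lambda>y. (y, 0::int)) ` U \<subseteq> U' \<inter> SS"
      proof
        fix z assume "z \<in> (\<lambda>y. (y, 0::int)) ` U"
        then obtain x where x: "x \<in> U" "z = (x,0)" by blast
        have xY: "x \<in> topspace Y" using openin_subset[OF U] x by blast
        obtain \<alpha> where a: "\<alpha> \<in> J" "c \<alpha> x \<subseteq> U" using cbase[OF U x(1)] by blast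
        obtain p q where pq: "p\<in>Lset" "q\<in>Lset" "Llt p (x,0)" "Llt (x,0) q"
          "\<forall>y\<in>topspace Y. Llt p (y,0) \<and> Llt (y,0) q \<longrightarrow> y \<in> c \<alpha> x"
          using interval_exists[OF a(1) xY] by blast
        define V where "V = {v \<in> Lset. (p, v) \<in> Lr \<and> p \<noteq> v \<and> (v, q) \<in> Lr \<and> v \<noteq> q}"
        have V: "V \<in> order_basic_sets Lset Lr" unfolding V_def order_basic_sets_def using pq(1,2) by blast
        have "(x,0) \<in> V" unfolding V_def using pq zero_in_L[OF xY] Lr_strict by blast
        moreover have "V \<inter> SS \<subseteq> (\<lambda>y. (y, 0::int)) ` U"
        proof
          fix v assume v: "v \<in> V \<inter> SS"
          then obtain y where y: "y \<in> topspace Y" "v = (y,0)" unfolding SS_def by blast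
          have "(p,(y,0)) \<in> Lr \<and> p \<noteq> (y,0)" "((y,0),q) \<in> Lr \<and> (y,0) \<noteq> q" using v y unfolding V_def by auto
          then have "Llt p (y,0)" "Llt (y,0) q" using Lr_strict[of p "(y,0)"] Lr_strict[of "(y,0)" q] by simp_all
          then have "y \<in> c \<alpha> x" using pq(5) y(1) by blast
          then show "v \<in> (\<lambda>y. (y, 0::int)) ` U" using a(2) y by blast
        qed
        ultimately have "(x,0) \<in> U'" unfolding U'_def using V by blast
        moreover have "(x,0) \<in> SS" unfolding SS_def using xY by blast
        ultimately show "z \<in> U' \<inter> SS" using x by blast
      qed
    qed
    then show "openin (subtopology LT SS) ((\<lambda>y. (y, 0)) ` U)"
      unfolding openin_subtopology using oU' by blast
  qed
qed

theorem GO: "GO_space Y"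
  unfolding GO_space_def
proof (intro exI conjI)
  show "LOTS LT" unfolding LT_def using LOTS_lots_top[OF lin_L] .
  show "SS \<subseteq> topspace LT" by (rule SS_sub)
  show "Y homeomorphic_space subtopology LT SS" using hom homeomorphic_map_imp_homeomorphic_space by blast
qed

end



definition cones :: "'b topology \<Rightarrow> 'j set \<Rightarrow> 'j rel \<Rightarrow> ('j \<Rightarrow> 'b \<Rightarrow> 'b set) \<Rightarrow> bool" where
  "cones Y J w c \<longleftrightarrow> Well_order w \<and> Field w = J \<and> J \<noteq> {} \<and>
    (\<forall>\<alpha> x. \<alpha>\<in>J \<and> x\<in>topspace Y \<longrightarrow> x \<in> c \<alpha> x \<and> c \<alpha> x \<subseteq> topspace Y \<and> openin Y (c \<alpha> x)
        \<and> (\<forall>y\<in>c \<alpha> x. c \<alpha> y = c \<alpha> x)) \<and>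
    (\<forall>\<alpha> \<beta> x. (\<alpha>,\<beta>)\<in>w \<and> x\<in>topspace Y \<longrightarrow> c \<beta> x \<subseteq> c \<alpha> x) \<and>
    (\<forall>U x. openin Y U \<and> x \<in> U \<longrightarrow> (\<exists>\<alpha>\<in>J. c \<alpha> x \<subseteq> U)) \<and>
    (\<forall>x y. x\<in>topspace Y \<and> y\<in>topspace Y \<and> x\<noteq>y \<longrightarrow> (\<exists>\<alpha>\<in>J. y \<notin> c \<alpha> x))"

lemma conesD:
  assumes "cones Y J w c"
  shows "Well_order w" "Field w = J" "J \<noteq> {}"
    "\<And>\<alpha> x. \<alpha>\<in>J \<Longrightarrow> x\<in>topspace Y \<Longrightarrow> x \<in> c \<alpha> x"
    "\<And>\<alpha> x. \<alpha>\<in>J \<Longrightarrow> x\<in>topspace Y \<Longrightarrow> c \<alpha> x \<subseteq> topspace Y"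
    "\<And>\<alpha> x. \<alpha>\<in>J \<Longrightarrow> x\<in>topspace Y \<Longrightarrow> openin Y (c \<alpha> x)"
    "\<And>\<alpha> x y. \<alpha>\<in>J \<Longrightarrow> x\<in>topspace Y \<Longrightarrow> y \<in> c \<alpha> x \<Longrightarrow> c \<alpha> y = c \<alpha> x"
    "\<And>\<alpha> \<beta> x. (\<alpha>,\<beta>)\<in>w \<Longrightarrow> x\<in>topspace Y \<Longrightarrow> c \<beta> x \<subseteq> c \<alpha> x"
    "\<And>U x. openin Y U \<Longrightarrow> x\<in>U \<Longrightarrow> \<exists>\<alpha>\<in>J. c \<alpha> x \<subseteq> U"
    "\<And>x y. x\<in>topspace Y \<Longrightarrow> y\<in>topspace Y \<Longrightarrow> x\<noteq>y \<Longrightarrow> \<exists>\<alpha>\<in>J. y \<notin> c \<alpha> x"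
proof -
  note H = assms[unfolded cones_def]
  note c1 = conjunct1 and c2 = conjunct2
  show "Well_order w" by (rule H[THEN c1])
  show "Field w = J" by (rule H[THEN c2, THEN c1])
  show "J \<noteq> {}" by (rule H[THEN c2, THEN c2, THEN c1])
  note P4 = H[THEN c2, THEN c2, THEN c2, THEN c1]
  note P5 = H[THEN c2, THEN c2, THEN c2, THEN c2, THEN c1]
  note P6 = H[THEN c2, THEN c2, THEN c2, THEN c2, THEN c2, THEN c1]
  note P7 = H[THEN c2, THEN c2, THEN c2, THEN c2, THEN c2, THEN c2]
  show "\<And>\<alpha> x. \<alpha>\<in>J \<Longrightarrow> x\<in>topspace Y \<Longrightarrow> x \<in> c \<alpha> x" using P4 by blast
  show "\<And>\<alpha> x. \<alpha>\<in>J \<Longrightarrow> x\<in>topspace Y \<Longrightarrow> c \<alpha> x \<subseteq> topspace Y" using P4 by blast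
  show "\<And>\<alpha> x. \<alpha>\<in>J \<Longrightarrow> x\<in>topspace Y \<Longrightarrow> openin Y (c \<alpha> x)" using P4 by blast
  show "\<And>\<alpha> x y. \<alpha>\<in>J \<Longrightarrow> x\<in>topspace Y \<Longrightarrow> y \<in> c \<alpha> x \<Longrightarrow> c \<alpha> y = c \<alpha> x" using P4 by blast
  show "\<And>\<alpha> \<beta> x. (\<alpha>,\<beta>)\<in>w \<Longrightarrow> x\<in>topspace Y \<Longrightarrow> c \<beta> x \<subseteq> c \<alpha> x" using P5 by blast
  show "\<And>U x. openin Y U \<Longrightarrow> x\<in>U \<Longrightarrow> \<exists>\<alpha>\<in>J. c \<alpha> x \<subseteq> U" using P6 by blast
  show "\<And>x y. x\<in>topspace Y \<Longrightarrow> y\<in>topspace Y \<Longrightarrow> x\<noteq>y \<Longrightarrow> \<exists>\<alpha>\<in>J. y \<notin> c \<alpha> x" using P7 by blast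
qed

lemma cones_GO:
  fixes Y :: "'b topology"
  assumes C: "cones Y J w c"
  shows "GO_space Y"
proof -
  have "\<exists>so :: 'b set rel. Well_order so \<and> Field so = UNIV" by (rule well_ordering)
  then obtain so :: "'b set rel" where so: "Well_order so" "Field so = UNIV" by (elim exE conjE)
  have "cone_sys Y J w c so"
  proof (rule cone_sys.intro)
    show "Well_order w" by (rule conesD(1)[OF C])
    show "Field w = J" by (rule conesD(2)[OF C])
    show "Well_order so" "Field so = UNIV" by (rule so(1), rule so(2))
    show "\<And>\<alpha> x. \<alpha>\<in>J \<Longrightarrow> x\<in>topspace Y \<Longrightarrow> x \<in> c \<alpha> x" by (rule conesD(4)[OF C])
    show "\<And>\<alpha> x. \<alpha>\<in>J \<Longrightarrow> x\<in>topspace Y \<Longrightarrow> c \<alpha> x \<subseteq> topspace Y" by (rule conesD(5)[OF C])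
    show "\<And>\<alpha> x. \<alpha>\<in>J \<Longrightarrow> x\<in>topspace Y \<Longrightarrow> openin Y (c \<alpha> x)" by (rule conesD(6)[OF C])
    show "\<And>\<alpha> x y. \<alpha>\<in>J \<Longrightarrow> x\<in>topspace Y \<Longrightarrow> y \<in> c \<alpha> x \<Longrightarrow> c \<alpha> y = c \<alpha> x" by (rule conesD(7)[OF C])
    show "\<And>\<alpha> \<beta> x. (\<alpha>,\<beta>)\<in>w \<Longrightarrow> x\<in>topspace Y \<Longrightarrow> c \<beta> x \<subseteq> c \<alpha> x" by (rule conesD(8)[OF C])
    show "\<And>U x. openin Y U \<Longrightarrow> x\<in>U \<Longrightarrow> \<exists>\<alpha>\<in>J. c \<alpha> x \<subseteq> U" by (rule conesD(9)[OF C])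
    show "\<And>x y. x\<in>topspace Y \<Longrightarrow> y\<in>topspace Y \<Longrightarrow> x\<noteq>y \<Longrightarrow> \<exists>\<alpha>\<in>J. y \<notin> c \<alpha> x" by (rule conesD(10)[OF C])
  qed
  then show ?thesis by (rule cone_sys.GO)
qed

lemma wo_max:
  assumes "Well_order w" "Field w = J" "finite A" "A \<noteq> {}" "A \<subseteq> J"
  shows "\<exists>m\<in>A. \<forall>a\<in>A. (a,m) \<in> w"
  using assms(3,4,5)
proof (induction A rule: finite_ne_induct)
  case (singleton x)
  then show ?case using assms(1,2) by (simp add: well_order_on_def linear_order_on_def partial_order_on_def
        preorder_on_def refl_on_def)
next
  case (insert x F)
  then obtain m where m: "m \<in> F" "\<forall>a\<in>F. (a,m)\<in>w" by blast
  have lin: "linear_order_on J w" using assms(1,2) unfolding well_order_on_def by simp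
  have xJ: "x \<in> J" "m \<in> J" using insert m by auto
  have tr: "trans w" and rf: "refl_on J w" and tot: "total_on J w"
    using lin unfolding linear_order_on_def partial_order_on_def preorder_on_def by auto
  have "(x,m)\<in>w \<or> (m,x)\<in>w"
  proof (cases "x = m")
    case True then show ?thesis using rf xJ unfolding refl_on_def by simp
  next
    case False then show ?thesis using tot xJ unfolding total_on_def by simp
  qed
  then consider "(x,m)\<in>w" | "(m,x)\<in>w" by blast
  then show ?case
  proof cases
    case 1 then show ?thesis using m by blast
  next
    case 2
    have "(x,x)\<in>w" using rf xJ unfolding refl_on_def by blast
    then show ?thesis using m 2 tr unfolding trans_def by blast
  qed
qed

lemma cones_prod:
  fixes n :: nat
  assumes C: "cones X J w c"
  shows "cones (product_topology (\<lambda>_. X) {..<n}) J w (\<lambda>\<alpha> f. PiE {..<n} (\<lambda>i. c \<alpha> (f i)))"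
proof -
  note WO = conesD(1)[OF C] and FJ = conesD(2)[OF C] and Jne = conesD(3)[OF C]
  note cin' = conesD(4)[OF C] and csub' = conesD(5)[OF C] and copen' = conesD(6)[OF C]
    and cpart' = conesD(7)[OF C]
  note c2 = conesD(8)[OF C] and c3 = conesD(9)[OF C] and c4 = conesD(10)[OF C]
  let ?P = "product_topology (\<lambda>_. X) {..<n}"
  let ?c = "\<lambda>\<alpha> f. PiE {..<n} (\<lambda>i. c \<alpha> (f i))"
  have tP: "topspace ?P = PiE {..<n} (\<lambda>_. topspace X)" by simp
  have A: "f \<in> ?c \<alpha> f \<and> ?c \<alpha> f \<subseteq> topspace ?P \<and> openin ?P (?c \<alpha> f) \<and> (\<forall>g\<in>?c \<alpha> f. ?c \<alpha> g = ?c \<alpha> f)"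
    if a: "\<alpha> \<in> J" and f: "f \<in> topspace ?P" for \<alpha> f
  proof (intro conjI ballI)
    have fi: "\<And>i. i < n \<Longrightarrow> f i \<in> topspace X" using f by (auto simp: PiE_iff)
    have fe: "f \<in> extensional {..<n}" using f by (auto simp: PiE_iff)
    have ci: "\<And>i. i < n \<Longrightarrow> f i \<in> c \<alpha> (f i)" using cin'[OF a fi] .
    show "f \<in> ?c \<alpha> f" using ci fe by (simp add: PiE_iff)
    have cs: "\<And>i. i < n \<Longrightarrow> c \<alpha> (f i) \<subseteq> topspace X" using csub'[OF a fi] .
    show "?c \<alpha> f \<subseteq> topspace ?P" using cs by (auto intro!: PiE_mono)
    have co: "\<And>i. i < n \<Longrightarrow> openin X (c \<alpha> (f i))" using copen'[OF a fi] .
    have fin: "finite {..<n}" by simp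
    show "openin ?P (?c \<alpha> f)" using co by (subst openin_PiE[OF fin]) auto
    fix g assume g: "g \<in> ?c \<alpha> f"
    have gi: "\<And>i. i < n \<Longrightarrow> g i \<in> c \<alpha> (f i)" using g by (simp add: PiE_iff)
    have "\<And>i. i < n \<Longrightarrow> c \<alpha> (g i) = c \<alpha> (f i)" using cpart'[OF a fi gi] .
    then show "?c \<alpha> g = ?c \<alpha> f" by (intro PiE_cong) auto
  qed
  have B: "?c \<beta> f \<subseteq> ?c \<alpha> f" if "(\<alpha>,\<beta>)\<in>w" "f \<in> topspace ?P" for \<alpha> \<beta> f
  proof -
    have "\<And>i. i < n \<Longrightarrow> c \<beta> (f i) \<subseteq> c \<alpha> (f i)" using c2[OF that(1)] that(2) by (simp add: PiE_iff)
    then show ?thesis by (auto intro!: PiE_mono)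
  qed
  have Cb: "\<exists>\<alpha>\<in>J. ?c \<alpha> f \<subseteq> U" if U: "openin ?P U" and f: "f \<in> U" for U f
  proof -
    have "\<forall>x \<in> U. \<exists>V. finite {i \<in> {..<n}. V i \<noteq> topspace X} \<and>
                 (\<forall>i \<in> {..<n}. openin X (V i)) \<and> x \<in> Pi\<^sub>E {..<n} V \<and> Pi\<^sub>E {..<n} V \<subseteq> U"
      using U by (rule openin_product_topology_alt[THEN iffD1])
    then have "\<exists>V. finite {i \<in> {..<n}. V i \<noteq> topspace X} \<and>
                 (\<forall>i \<in> {..<n}. openin X (V i)) \<and> f \<in> Pi\<^sub>E {..<n} V \<and> Pi\<^sub>E {..<n} V \<subseteq> U"
      using f by (rule bspec)
    then obtain V where V: "finite {i \<in> {..<n}. V i \<noteq> topspace X}" "\<forall>i\<in>{..<n}. openin X (V i)"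
      "f \<in> PiE {..<n} V" "PiE {..<n} V \<subseteq> U" by (elim exE conjE)
    have fV: "\<And>i. i < n \<Longrightarrow> f i \<in> V i" using V(3) by (simp add: PiE_iff)
    have oV: "\<And>i. i < n \<Longrightarrow> openin X (V i)" using V(2) by simp
    have fX: "\<And>i. i < n \<Longrightarrow> f i \<in> topspace X" using fV oV openin_subset by blast
    have ex: "\<forall>i\<in>{..<n}. \<exists>\<alpha>. \<alpha>\<in>J \<and> c \<alpha> (f i) \<subseteq> V i"
    proof
      fix i assume "i \<in> {..<n}"
      then have i: "i < n" by simp
      show "\<exists>\<alpha>. \<alpha>\<in>J \<and> c \<alpha> (f i) \<subseteq> V i" using c3[OF oV[OF i] fV[OF i]] by blast
    qed
    obtain g where g0: "\<forall>i\<in>{..<n}. g i \<in> J \<and> c (g i) (f i) \<subseteq> V i"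
      using bchoice[OF ex] by blast
    have g: "\<And>i. i < n \<Longrightarrow> g i \<in> J \<and> c (g i) (f i) \<subseteq> V i" using g0 by simp
    obtain a0 where a0: "a0 \<in> J" using Jne by auto
    define A where "A = insert a0 (g ` {..<n})"
    have Afin: "finite A" unfolding A_def by simp
    have Ane: "A \<noteq> {}" unfolding A_def by simp
    have AJ: "A \<subseteq> J" unfolding A_def using g a0 by auto
    obtain m where m1: "m \<in> A" and m2: "\<forall>a\<in>A. (a,m)\<in>w"
      using wo_max[OF WO FJ Afin Ane AJ] by (elim bexE)
    have mJ: "m \<in> J" using m1 AJ by (rule subsetD[rotated])
    have m: "m \<in> A" "\<forall>i<n. (g i, m) \<in> w" using m1 m2 unfolding A_def by auto
    have "?c m f \<subseteq> PiE {..<n} V"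
    proof
      fix h assume "h \<in> ?c m f"
      then have "\<And>i. i < n \<Longrightarrow> h i \<in> c m (f i)" "h \<in> extensional {..<n}" by (auto simp: PiE_iff)
      moreover have "c m (f i) \<subseteq> V i" if i: "i < n" for i
      proof -
        have "(g i, m) \<in> w" using m(2) i by blast
        then have "c m (f i) \<subseteq> c (g i) (f i)" using c2 fX[OF i] by blast
        then show ?thesis using g[OF i] by blast
      qed
      ultimately show "h \<in> PiE {..<n} V" by (auto simp: PiE_iff)
    qed
    then show ?thesis by (rule bexI[OF subset_trans[OF _ V(4)] mJ])
  qed
  have D: "\<exists>\<alpha>\<in>J. g \<notin> ?c \<alpha> f" if "f \<in> topspace ?P" "g \<in> topspace ?P" "f \<noteq> g" for f g
  proof -
    have fP: "f \<in> PiE {..<n} (\<lambda>_. topspace X)" and gP: "g \<in> PiE {..<n} (\<lambda>_. topspace X)"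
      using that(1,2) tP by auto
    have "\<not> (\<forall>i<n. f i = g i)"
    proof
      assume h: "\<forall>i<n. f i = g i"
      have "f = g" by (rule PiE_ext[OF fP gP]) (use h in simp)
      then show False using that(3) by simp
    qed
    then obtain i where i: "i < n" "f i \<noteq> g i" by blast
    have "f i \<in> topspace X" "g i \<in> topspace X" using that i by (auto simp: PiE_iff)
    then obtain \<alpha> where "\<alpha> \<in> J" "g i \<notin> c \<alpha> (f i)" using c4 i by blast
    then show ?thesis using i by (auto simp: PiE_iff)
  qed
  have h1: "\<forall>\<alpha> f. \<alpha>\<in>J \<and> f\<in>topspace ?P \<longrightarrow> f \<in> ?c \<alpha> f \<and> ?c \<alpha> f \<subseteq> topspace ?P \<and> openin ?P (?c \<alpha> f)
        \<and> (\<forall>g\<in>?c \<alpha> f. ?c \<alpha> g = ?c \<alpha> f)"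
    using A by blast
  have h2: "\<forall>\<alpha> \<beta> f. (\<alpha>,\<beta>)\<in>w \<and> f\<in>topspace ?P \<longrightarrow> ?c \<beta> f \<subseteq> ?c \<alpha> f" using B by blast
  have h3: "\<forall>U f. openin ?P U \<and> f \<in> U \<longrightarrow> (\<exists>\<alpha>\<in>J. ?c \<alpha> f \<subseteq> U)" using Cb by blast
  have h4: "\<forall>f g. f\<in>topspace ?P \<and> g\<in>topspace ?P \<and> f\<noteq>g \<longrightarrow> (\<exists>\<alpha>\<in>J. g \<notin> ?c \<alpha> f)" using D by blast
  show ?thesis unfolding cones_def by (intro conjI WO FJ Jne h1 h2 h3 h4)
qed




lemma wo_refl: "Well_order w \<Longrightarrow> a \<in> Field w \<Longrightarrow> (a,a) \<in> w"
  unfolding well_order_on_def linear_order_on_def partial_order_on_def preorder_on_def refl_on_def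
  by simp

lemma wo_trans': "Well_order w \<Longrightarrow> (a,b) \<in> w \<Longrightarrow> (b,c) \<in> w \<Longrightarrow> (a,c) \<in> w"
  unfolding well_order_on_def linear_order_on_def partial_order_on_def preorder_on_def
  by (meson transD)

lemma under_small:
  fixes I :: "'i set"
  assumes inf: "infinite I" and a: "\<alpha> \<in> I"
  shows "under (card_of I) \<alpha> \<prec> I"
proof -
  have aF: "\<alpha> \<in> Field (card_of I)" using a by (simp add: Field_card_of)
  have nl: "\<not> (\<exists>f. inj_on f I \<and> f ` I \<subseteq> underS (card_of I) \<alpha>)"
    by (subst card_of_ordLess) (rule card_of_underS[OF card_of_Card_order aF])
  have sub: "underS (card_of I) \<alpha> \<subseteq> I"
    using Field_card_of[of I] unfolding underS_def Field_def by blast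
  have lt: "underS (card_of I) \<alpha> \<prec> I"
    unfolding lesspoll_def
  proof
    show "underS (card_of I) \<alpha> \<lesssim> I" using sub by (rule subset_imp_lepoll)
    show "\<not> underS (card_of I) \<alpha> \<approx> I"
    proof
      assume "underS (card_of I) \<alpha> \<approx> I"
      then have "I \<lesssim> underS (card_of I) \<alpha>" using eqpoll_sym eqpoll_imp_lepoll by blast
      then show False using nl unfolding lepoll_def by blast
    qed
  qed
  have eq: "under (card_of I) \<alpha> = insert \<alpha> (underS (card_of I) \<alpha>)"
  proof -
    have "(\<alpha>,\<alpha>) \<in> (card_of I)" using wo_refl[OF card_of_Well_order aF] .
    then show ?thesis unfolding under_def underS_def by blast
  qed
  show ?thesis
  proof (cases "finite (underS (card_of I) \<alpha>)")
    case True
    then have "finite (under (card_of I) \<alpha>)" using eq by simp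
    then show ?thesis using finite_lesspoll_infinite[OF inf] by blast
  next
    case False
    then have "insert \<alpha> (underS (card_of I) \<alpha>) \<approx> underS (card_of I) \<alpha>" by (rule infinite_insert_eqpoll)
    then show ?thesis using eq lt eq_lesspoll_trans by metis
  qed
qed

lemma disc_nbhd:
  assumes "discrete_family X A" "y \<in> topspace X"
  obtains U where "openin X U" "y \<in> U" "\<And>A' B. A' \<in> A \<Longrightarrow> B \<in> A \<Longrightarrow> A' \<inter> U \<noteq> {} \<Longrightarrow> B \<inter> U \<noteq> {} \<Longrightarrow> A' = B"
proof -
  have "\<exists>U. openin X U \<and> y \<in> U \<and> (\<forall>A' \<in> A. \<forall>B \<in> A. A' \<inter> U \<noteq> {} \<and> B \<inter> U \<noteq> {} \<longrightarrow> A' = B)"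
    using assms unfolding discrete_family_def by (rule bspec)
  then obtain U where "openin X U" "y \<in> U" "\<forall>A' \<in> A. \<forall>B \<in> A. A' \<inter> U \<noteq> {} \<and> B \<inter> U \<noteq> {} \<longrightarrow> A' = B"
    by (elim exE conjE)
  then show ?thesis using that by simp
qed

lemma disc_disjoint:
  assumes "discrete_family X A" "B1 \<in> A" "B2 \<in> A" "y \<in> B1" "y \<in> B2" "y \<in> topspace X"
  shows "B1 = B2"
proof -
  obtain U where U: "openin X U" "y \<in> U"
    "\<And>A' B. A' \<in> A \<Longrightarrow> B \<in> A \<Longrightarrow> A' \<inter> U \<noteq> {} \<Longrightarrow> B \<inter> U \<noteq> {} \<Longrightarrow> A' = B"
    using disc_nbhd[OF assms(1,6)] by metis
  have "B1 \<inter> U \<noteq> {}" "B2 \<inter> U \<noteq> {}" using assms(4,5) U(2) by auto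
  then show ?thesis using U(3)[OF assms(2,3)] by simp
qed

lemma disc_compl_open:
  assumes disc: "discrete_family X A" and cl: "\<And>B. B \<in> A \<Longrightarrow> closedin X B"
  shows "openin X (topspace X - \<Union>A)"
proof (subst openin_subopen, intro ballI)
  fix z assume z: "z \<in> topspace X - \<Union>A"
  have zX: "z \<in> topspace X" and zA: "\<And>B. B \<in> A \<Longrightarrow> z \<notin> B" using z by auto
  obtain U where U: "openin X U" "z \<in> U"
    "\<And>A' B. A' \<in> A \<Longrightarrow> B \<in> A \<Longrightarrow> A' \<inter> U \<noteq> {} \<Longrightarrow> B \<inter> U \<noteq> {} \<Longrightarrow> A' = B"
    using disc_nbhd[OF disc zX] by metis
  have UX: "U \<subseteq> topspace X" using openin_subset[OF U(1)] .
  show "\<exists>T. openin X T \<and> z \<in> T \<and> T \<subseteq> topspace X - \<Union>A"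
  proof (cases "\<exists>B0\<in>A. B0 \<inter> U \<noteq> {}")
    case True
    then obtain B0 where B0: "B0 \<in> A" "B0 \<inter> U \<noteq> {}" by blast
    have o: "openin X (U - B0)" using openin_diff[OF U(1) cl[OF B0(1)]] .
    have zin: "z \<in> U - B0" using U(2) zA[OF B0(1)] by simp
    have sub: "U - B0 \<subseteq> topspace X - \<Union>A"
    proof
      fix t assume t: "t \<in> U - B0"
      have "t \<notin> B" if B: "B \<in> A" for B
      proof
        assume tB: "t \<in> B"
        then have "B \<inter> U \<noteq> {}" using t by blast
        then have "B = B0" using U(3)[OF B B0(1) _ B0(2)] by simp
        then show False using t tB by simp
      qed
      then show "t \<in> topspace X - \<Union>A" using t UX by blast
    qed
    show ?thesis using o zin sub by blast
  next
    case False
    then have "U \<subseteq> topspace X - \<Union>A" using UX by blast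
    then show ?thesis using U(1,2) by blast
  qed
qed

lemma nondisc_cones:
  fixes X :: "'a topology" and I :: "'i set" and Bf :: "'i \<Rightarrow> 'a set set"
  assumes T1: "t1_space X"
   and PN: "\<And>F. (\<forall>U\<in>F. openin X U) \<Longrightarrow> F \<prec> I \<Longrightarrow> openin X (topspace X \<inter> \<Inter>F)"
   and inf: "infinite I"
   and disc: "\<And>\<alpha>. \<alpha>\<in>I \<Longrightarrow> discrete_family X (Bf \<alpha>)"
   and clo: "\<And>\<alpha> B. \<alpha>\<in>I \<Longrightarrow> B\<in>Bf \<alpha> \<Longrightarrow> openin X B \<and> closedin X B"
   and base: "is_base X (\<Union>\<alpha>\<in>I. Bf \<alpha>)"
  shows "\<exists>c. cones X I (card_of I) c"
proof -
  define Q where "Q \<alpha> x = (if \<exists>B\<in>Bf \<alpha>. x\<in>B then (SOME B. B\<in>Bf \<alpha> \<and> x\<in>B) else topspace X - \<Union>(Bf \<alpha>))"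
    for \<alpha> x
  define w where "w = (card_of I)"
  define c where "c \<alpha> x = topspace X \<inter> \<Inter>((\<lambda>\<beta>. Q \<beta> x) ` under w \<alpha>)" for \<alpha> x
  have WO: "Well_order w" unfolding w_def by (rule card_of_Well_order)
  have FJ: "Field w = I" unfolding w_def by (rule Field_card_of)
  have Jne: "I \<noteq> {}" using inf by auto
  have underI: "\<beta> \<in> I" if "\<beta> \<in> under w \<alpha>" for \<beta> \<alpha>
    using that FJ unfolding under_def Field_def by blast
  have Qin: "Q \<alpha> x \<in> Bf \<alpha> \<and> x \<in> Q \<alpha> x" if "B \<in> Bf \<alpha>" "x \<in> B" for \<alpha> x B
  proof -
    have ex: "\<exists>B. B\<in>Bf \<alpha> \<and> x\<in>B" using that by blast
    then have "Q \<alpha> x = (SOME B. B\<in>Bf \<alpha> \<and> x\<in>B)" unfolding Q_def by auto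
    then show ?thesis using someI_ex[OF ex] by simp
  qed
  have Qout: "Q \<alpha> x = topspace X - \<Union>(Bf \<alpha>)" if "\<not>(\<exists>B\<in>Bf \<alpha>. x\<in>B)" for \<alpha> x
    using that unfolding Q_def by simp
  have Qbase: "Q \<alpha> x = B" if "\<alpha> \<in> I" "B \<in> Bf \<alpha>" "x \<in> B" "x \<in> topspace X" for \<alpha> x B
  proof -
    have "Q \<alpha> x \<in> Bf \<alpha>" "x \<in> Q \<alpha> x" using Qin[OF that(2,3)] by auto
    then show ?thesis using disc_disjoint[OF disc[OF that(1)] _ that(2) _ that(3,4)] by blast
  qed
  have Q1: "x \<in> Q \<alpha> x" if "\<alpha> \<in> I" "x \<in> topspace X" for \<alpha> x
  proof (cases "\<exists>B\<in>Bf \<alpha>. x\<in>B")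
    case True then show ?thesis using Qin by blast
  next
    case False then show ?thesis using Qout[OF False] that by blast
  qed
  have Q2: "openin X (Q \<alpha> x)" if "\<alpha> \<in> I" "x \<in> topspace X" for \<alpha> x
  proof (cases "\<exists>B\<in>Bf \<alpha>. x\<in>B")
    case True then show ?thesis using Qin clo[OF that(1)] by blast
  next
    case False
    have "openin X (topspace X - \<Union>(Bf \<alpha>))"
      using disc_compl_open[OF disc[OF that(1)]] clo[OF that(1)] by blast
    then show ?thesis using Qout[OF False] by simp
  qed
  have Q3: "Q \<alpha> y = Q \<alpha> x" if "\<alpha> \<in> I" "x \<in> topspace X" "y \<in> Q \<alpha> x" for \<alpha> x y
  proof (cases "\<exists>B\<in>Bf \<alpha>. x\<in>B")
    case True
    then obtain B where B: "B \<in> Bf \<alpha>" "x \<in> B" by blast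
    have QB: "Q \<alpha> x = B" using Qbase[OF that(1) B that(2)] .
    have yB: "y \<in> B" using that(3) QB by simp
    have "y \<in> topspace X" using yB clo[OF that(1) B(1)] openin_subset by blast
    then have "Q \<alpha> y = B" using Qbase[OF that(1) B(1) yB] by simp
    then show ?thesis using QB by simp
  next
    case False
    have "y \<in> topspace X - \<Union>(Bf \<alpha>)" using that(3) Qout[OF False] by simp
    then have "\<not>(\<exists>B\<in>Bf \<alpha>. y\<in>B)" by blast
    then show ?thesis using Qout False by simp
  qed
  have cin: "x \<in> c \<alpha> x" if "\<alpha> \<in> I" "x \<in> topspace X" for \<alpha> x
    unfolding c_def using Q1 underI that(2) by blast
  have csub: "c \<alpha> x \<subseteq> topspace X" for \<alpha> x unfolding c_def by blast
  have copen: "openin X (c \<alpha> x)" if a: "\<alpha> \<in> I" and x: "x \<in> topspace X" for \<alpha> x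
  proof -
    let ?F = "(\<lambda>\<beta>. Q \<beta> x) ` under w \<alpha>"
    have "\<forall>U\<in>?F. openin X U" using Q2 underI x by blast
    moreover have "?F \<prec> I"
    proof -
      have "?F \<lesssim> under w \<alpha>" by (rule image_lepoll)
      moreover have "under w \<alpha> \<prec> I" unfolding w_def by (rule under_small[OF inf a])
      ultimately show ?thesis by (rule lesspoll_trans1)
    qed
    ultimately show ?thesis unfolding c_def by (rule PN)
  qed
  have cpart: "c \<alpha> y = c \<alpha> x" if a: "\<alpha> \<in> I" and x: "x \<in> topspace X" and y: "y \<in> c \<alpha> x" for \<alpha> x y
  proof -
    have "\<And>\<beta>. \<beta> \<in> under w \<alpha> \<Longrightarrow> Q \<beta> y = Q \<beta> x"
    proof -
      fix \<beta> assume b: "\<beta> \<in> under w \<alpha>"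
      have "y \<in> Q \<beta> x" using y b unfolding c_def by blast
      then show "Q \<beta> y = Q \<beta> x" using Q3[OF underI[OF b] x] by blast
    qed
    then have "(\<lambda>\<beta>. Q \<beta> y) ` under w \<alpha> = (\<lambda>\<beta>. Q \<beta> x) ` under w \<alpha>" by (rule image_cong[OF refl])
    then show ?thesis unfolding c_def by simp
  qed
  have cmono: "c \<beta> x \<subseteq> c \<alpha> x" if ab: "(\<alpha>,\<beta>)\<in>w" for \<alpha> \<beta> x
  proof -
    have "under w \<alpha> \<subseteq> under w \<beta>"
      unfolding under_def using wo_trans'[OF WO _ ab] by blast
    then show ?thesis unfolding c_def by blast
  qed
  have cbase: "\<exists>\<alpha>\<in>I. c \<alpha> x \<subseteq> U" if U: "openin X U" and x: "x \<in> U" for U x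
  proof -
    have bb: "\<forall>U x. openin X U \<and> x \<in> U \<longrightarrow> (\<exists>B \<in> (\<Union>\<alpha>\<in>I. Bf \<alpha>). x \<in> B \<and> B \<subseteq> U)"
      using base unfolding is_base_def by (rule conjunct2)
    have "\<exists>B \<in> (\<Union>\<alpha>\<in>I. Bf \<alpha>). x \<in> B \<and> B \<subseteq> U" using bb U x by simp
    then obtain B where B: "B \<in> (\<Union>\<alpha>\<in>I. Bf \<alpha>)" "x \<in> B" "B \<subseteq> U" by (elim bexE conjE)
    then obtain \<gamma> where g: "\<gamma> \<in> I" "B \<in> Bf \<gamma>" by blast
    have xX: "x \<in> topspace X" using U x openin_subset by blast
    have "\<gamma> \<in> under w \<gamma>"
      using wo_refl[OF WO] FJ g(1) unfolding under_def by blast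
    then have "c \<gamma> x \<subseteq> Q \<gamma> x" unfolding c_def by blast
    also have "Q \<gamma> x = B" using Qbase[OF g B(2) xX] .
    finally show ?thesis using B(3) g(1) by blast
  qed
  have csep: "\<exists>\<alpha>\<in>I. y \<notin> c \<alpha> x" if "x \<in> topspace X" "y \<in> topspace X" "x \<noteq> y" for x y
  proof -
    have "\<exists>U. openin X U \<and> x \<in> U \<and> y \<notin> U" using T1 that unfolding t1_space_def by simp
    then obtain U where U: "openin X U" "x \<in> U" "y \<notin> U" by (elim exE conjE)
    then show ?thesis using cbase[OF U(1,2)] by blast
  qed
  have h1: "\<forall>\<alpha> x. \<alpha>\<in>I \<and> x\<in>topspace X \<longrightarrow> x \<in> c \<alpha> x \<and> c \<alpha> x \<subseteq> topspace X \<and> openin X (c \<alpha> x)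
        \<and> (\<forall>y\<in>c \<alpha> x. c \<alpha> y = c \<alpha> x)"
  proof (intro allI impI conjI ballI)
    fix \<alpha> x assume h: "\<alpha>\<in>I \<and> x\<in>topspace X"
    show "x \<in> c \<alpha> x" using h by (intro cin) simp_all
    show "c \<alpha> x \<subseteq> topspace X" by (rule csub)
    show "openin X (c \<alpha> x)" using h by (intro copen) simp_all
    fix y assume "y \<in> c \<alpha> x"
    then show "c \<alpha> y = c \<alpha> x" using h by (intro cpart) simp_all
  qed
  have h2: "\<forall>\<alpha> \<beta> x. (\<alpha>,\<beta>)\<in>w \<and> x\<in>topspace X \<longrightarrow> c \<beta> x \<subseteq> c \<alpha> x" using cmono by blast
  have h3: "\<forall>U x. openin X U \<and> x \<in> U \<longrightarrow> (\<exists>\<alpha>\<in>I. c \<alpha> x \<subseteq> U)" using cbase by blast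
  have h4: "\<forall>x y. x\<in>topspace X \<and> y\<in>topspace X \<and> x\<noteq>y \<longrightarrow> (\<exists>\<alpha>\<in>I. y \<notin> c \<alpha> x)" using csep by blast
  have "cones X I w c" unfolding cones_def by (intro conjI WO FJ Jne h1 h2 h3 h4)
  then have cc: "cones X I (card_of I) c" unfolding w_def .
  show ?thesis by (rule exI[of _ c]) (rule cc)
qed




lemma discrete_cones:
  fixes X :: "'a topology"
  assumes D: "discrete_space X"
  shows "cones X (UNIV::unit set) (card_of (UNIV::unit set)) (\<lambda>\<alpha> x. {x})"
proof -
  have h1: "\<forall>\<alpha> x. \<alpha>\<in>(UNIV::unit set) \<and> x\<in>topspace X \<longrightarrow> x \<in> {x} \<and> {x} \<subseteq> topspace X \<and> openin X {x}
        \<and> (\<forall>y\<in>{x}. {y} = {x})"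
    using D unfolding discrete_space_def by simp
  have h2: "\<forall>\<alpha> \<beta> x. (\<alpha>,\<beta>)\<in>card_of (UNIV::unit set) \<and> x\<in>topspace X \<longrightarrow> {x} \<subseteq> {x}" by simp
  have h3: "\<forall>U x. openin X U \<and> x \<in> U \<longrightarrow> (\<exists>\<alpha>\<in>(UNIV::unit set). {x} \<subseteq> U)" by simp
  have h4: "\<forall>x y. x\<in>topspace X \<and> y\<in>topspace X \<and> x\<noteq>y \<longrightarrow> (\<exists>\<alpha>\<in>(UNIV::unit set). y \<notin> {x})" by auto
  show ?thesis unfolding cones_def
    by (intro conjI card_of_Well_order Field_card_of UNIV_not_empty h1 h2 h3 h4)
qed

theorem theorem2p4:
  fixes X :: "'a topology" and I :: "'i set" and n :: nat
  assumes "tychonoff_space X"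
    and "P_number X I"
    and "has_discrete_clopen_base X I"
  shows "GO_space (product_topology (\<lambda>_. X) {..<n})"
proof (cases "discrete_space X")
  case True
  have "cones X (UNIV::unit set) (card_of (UNIV::unit set)) (\<lambda>\<alpha> x. {x})" by (rule discrete_cones[OF True])
  then show ?thesis by (rule cones_GO[OF cones_prod])
next
  case False
  have T1: "t1_space X" using assms(1) unfolding tychonoff_space_def by simp
  have PN: "\<And>F. (\<forall>U\<in>F. openin X U) \<Longrightarrow> F \<prec> I \<Longrightarrow> openin X (topspace X \<inter> \<Inter>F)"
    using assms(2) False unfolding P_number_def by simp
  have ex: "\<exists>F. (\<forall>U\<in>F. openin X U) \<and> F \<lesssim> I \<and> \<not> openin X (topspace X \<inter> \<Inter>F)"
    using assms(2) False unfolding P_number_def by simp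
  then obtain F where F: "\<forall>U\<in>F. openin X U" "F \<lesssim> I" "\<not> openin X (topspace X \<inter> \<Inter>F)"
    by (elim exE conjE)
  have inf: "infinite I"
  proof
    assume fI: "finite I"
    obtain f where f: "inj_on f F" "f ` F \<subseteq> I" using F(2) unfolding lepoll_def by (elim exE conjE)
    have fF: "finite F" using inj_on_finite[OF f fI] .
    have "openin X (topspace X \<inter> \<Inter>F)"
    proof (cases "F = {}")
      case True then show ?thesis by simp
    next
      case False
      have "openin X (\<Inter>F)" using openin_Inter[OF fF False] F(1) by blast
      then show ?thesis by (intro openin_Int openin_topspace)
    qed
    then show False using F(3) by simp
  qed
  obtain Bf :: "'i \<Rightarrow> 'a set set" where Bf: "\<forall>\<alpha> \<in> I. discrete_family X (Bf \<alpha>)"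
        "\<forall>\<alpha> \<in> I. \<forall>B \<in> Bf \<alpha>. openin X B \<and> closedin X B"
        "is_base X (\<Union>\<alpha> \<in> I. Bf \<alpha>)"
    using assms(3) unfolding has_discrete_clopen_base_def by (elim exE conjE)
  have "\<exists>c. cones X I (card_of I) c"
  proof (rule nondisc_cones[OF T1 PN inf])
    show "\<And>\<alpha>. \<alpha>\<in>I \<Longrightarrow> discrete_family X (Bf \<alpha>)" using Bf(1) by simp
    show "\<And>\<alpha> B. \<alpha>\<in>I \<Longrightarrow> B\<in>Bf \<alpha> \<Longrightarrow> openin X B \<and> closedin X B" using Bf(2) by simp
    show "is_base X (\<Union>\<alpha>\<in>I. Bf \<alpha>)" by (rule Bf(3))
  qed
  then obtain c where "cones X I (card_of I) c" by (elim exE)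
  then show ?thesis by (rule cones_GO[OF cones_prod])
qed


end
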